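(* Let $p\in\mathcal{P}^d$ be perfect. Then the quadratic part $\pi_\Phi p$ of $p$ is an edge form of an L-type domain, i.e. $\pi_\Phi p\in\Phi^d$ and the L-type domain containing it is one-dimensional.
   Context: $\mathcal{P}^d$ is the set of real polynomials $f$ of degree $2$ in $x_1,\dots,x_d$ with $f(\mathbf{z})\ge0$ for all $\mathbf{z}\in\mathbb{Z}^d$; $\mathcal{V}(f)=\{\mathbf{z}\in\mathbb{Z}^d: f(\mathbf{z})=0\}$. $p\in\mathcal{P}^d$ is perfect if $\mathcal{V}(p)\neq\emptyset$ and every real polynomial of degree at most $2$ vanishing on $\mathcal{V}(p)$ is a scalar multiple of $p$. $\pi_\Phi p$ denotes the homogeneous degree-2 part of $p$. $\Phi^d$ is the cone of quadratic forms on $\mathbb{R}^d$ that are positive definite or positive semidefinite with kernel spanned by integer vectors. For $\varphi\in\Phi^d$, the Delaunay tiling $\mathrm{Del}(\varphi)$ is the tiling of $\mathbb{R}^d$ by the Delaunay polyhedra $\operatorname{conv}\mathcal{V}(f)$, $f\in\mathcal{P}^d$ with $\pi_\Phi f=\varphi$ and $\mathcal{V}(f)$ not contained in a hyperplane (for positive definite $\varphi$ these are the polytopes inscribed in ellipsoids $\varphi[\mathbf{x}-\mathbf{c}]\le R^2$ with no interior integer points; for semidefinite $\varphi$ they are cylinders over such polytopes along $\ker\varphi$). The L-type domain of a Delaunay tiling $\mathcal{D}$ is $\{\varphi\in\Phi^d:\mathrm{Del}(\varphi)=\mathcal{D}\}$; forms lying in one-dimensional L-type domains are called edge forms. *)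

theory Defs
  imports "HOL-Analysis.Analysis"
begin

text \<open>A real polynomial of degree at most 2 in d variables (d = CARD('n)) is
  represented by a triple (A, b, c) with A a symmetric matrix; it evaluates to
  x \<bullet> (A x) + b \<bullet> x + c.  The homogeneous degree-2 part is the
  quadratic form given by A.\<close>

type_synonym 'n qpoly = "(real^'n^'n) \<times> (real^'n) \<times> real"

definition qpoly_ok :: "'n::finite qpoly \<Rightarrow> bool" where
  "qpoly_ok f \<longleftrightarrow> transpose (fst f) = fst f"

definition qeval :: "'n::finite qpoly \<Rightarrow> real^'n \<Rightarrow> real" where
  "qeval f x = x \<bullet> (fst f *v x) + fst (snd f) \<bullet> x + snd (snd f)"

definition quad_part :: "'n::finite qpoly \<Rightarrow> real^'n^'n" where
  "quad_part f = fst f"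

definition int_vec :: "real^'n::finite \<Rightarrow> bool" where
  "int_vec z \<longleftrightarrow> (\<forall>i. z $ i \<in> \<int>)"

definition Pd :: "'n::finite qpoly set" where
  "Pd = {f. qpoly_ok f \<and> fst f \<noteq> 0 \<and> (\<forall>z. int_vec z \<longrightarrow> qeval f z \<ge> 0)}"

definition zeroset :: "'n::finite qpoly \<Rightarrow> (real^'n) set" where
  "zeroset f = {z. int_vec z \<and> qeval f z = 0}"

definition perfect :: "'n::finite qpoly \<Rightarrow> bool" where
  "perfect p \<longleftrightarrow> p \<in> Pd \<and> zeroset p \<noteq> {} \<and>
     (\<forall>q. qpoly_ok q \<and> (\<forall>z\<in>zeroset p. qeval q z = 0) \<longrightarrow>
          (\<exists>t::real. \<forall>x. qeval q x = t * qeval p x))"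

text \<open>Phi^d: positive semidefinite forms whose kernel is spanned by integer
  vectors (positive definite forms have kernel {0} = span {}).\<close>
definition Phi :: "(real^'n^'n::finite) set" where
  "Phi = {A. transpose A = A \<and> (\<forall>x. x \<bullet> (A *v x) \<ge> 0) \<and>
             {x. A *v x = 0} = span {z. int_vec z \<and> A *v z = 0}}"

definition in_affine_hyperplane :: "(real^'n::finite) set \<Rightarrow> bool" where
  "in_affine_hyperplane S \<longleftrightarrow> (\<exists>a \<beta>. a \<noteq> 0 \<and> S \<subseteq> {x. a \<bullet> x = \<beta>})"

definition Del :: "real^'n^'n \<Rightarrow> (real^'n::finite) set set" where
  "Del \<phi> = {convex hull (zeroset f) | f. f \<in> Pd \<and> quad_part f = \<phi> \<and>
                \<not> in_affine_hyperplane (zeroset f)}"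

definition Ltype_domain :: "(real^'n::finite) set set \<Rightarrow> (real^'n^'n) set" where
  "Ltype_domain D = {\<phi> \<in> Phi. Del \<phi> = D}"

end

theory Submission
  imports Defs
begin


lemma qeval_add: "qeval (f + g) x = qeval f x + qeval g x"
  by (simp add: qeval_def matrix_vector_mult_add_rdistrib inner_add_right inner_add_left fst_add snd_add)

lemma qeval_scaleR: "qeval (scaleR c f) x = c * qeval f x"
  by (simp add: qeval_def scaleR_matrix_vector_assoc[symmetric] algebra_simps)

lemma qeval_diff: "qeval (f - g) x = qeval f x - qeval g x"
  using qeval_add[of "f - g" g x] by simp

lemma qeval_0: "qeval 0 x = 0" by (simp add: qeval_def)

lemma qeval_sum: "qeval (\<Sum>k\<in>B. h k) x = (\<Sum>k\<in>B. qeval (h k) x)"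
  by (induction B rule: infinite_finite_induct) (auto simp: qeval_add qeval_0)

lemma sym_iff: "transpose (C::real^'n::finite^'n) = C \<longleftrightarrow> (\<forall>i j. C$i$j = C$j$i)"
  by (auto simp: transpose_def vec_eq_iff)

lemma mv_neg: "(C::real^'n::finite^'n) *v (- x) = - (C *v x)"
  by (simp add: vec_eq_iff matrix_vector_mult_def sum_negf)

lemma quad_axis: "axis i 1 \<bullet> (C *v axis j 1) = (C::real^'n::finite^'n) $ i $ j"
  by (simp add: matrix_vector_mult_basis column_def inner_axis')

lemma sym_zero:
  fixes C :: "real^'n::finite^'n"
  assumes "transpose C = C" "\<And>x. x \<bullet> (C *v x) = 0"
  shows "C = 0"
proof -
  have "C $ i $ j = 0" for i j
  proof -
    have s: "C $ j $ i = C $ i $ j" using assms(1)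
      by (simp add: sym_iff)
    have "0 = (axis i 1 + axis j 1) \<bullet> (C *v (axis i 1 + axis j 1))" using assms(2) by simp
    also have "\<dots> = C$i$i + C$i$j + C$j$i + C$j$j"
      by (simp add: matrix_vector_right_distrib inner_add_left inner_add_right quad_axis)
    finally show ?thesis using assms(2)[of "axis i 1"] assms(2)[of "axis j 1"] s
      by (simp add: quad_axis)
  qed
  then show ?thesis by (simp add: vec_eq_iff)
qed

lemma qeval_zero:
  assumes "qpoly_ok f" "\<And>x. qeval f x = 0"
  shows "f = 0"
proof -
  obtain C b c where f: "f = (C, b, c)" by (cases f) auto
  have c: "c = 0" using assms(2)[of 0] by (simp add: f qeval_def)
  have q: "x \<bullet> (C *v x) = 0" for x
    using assms(2)[of x] assms(2)[of "-x"] c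
    by (simp add: f qeval_def mv_neg)
  have C: "C = 0" using sym_zero[of C] q assms(1) by (simp add: f qpoly_ok_def)
  have "b \<bullet> b = 0" using assms(2)[of b] by (simp add: f qeval_def C c)
  then show ?thesis using f C c by (simp add: zero_prod_def)
qed

lemma qeval_eq:
  assumes "qpoly_ok f" "qpoly_ok g" "\<And>x. qeval f x = qeval g x"
  shows "f = g"
proof -
  have "qpoly_ok (f - g)" using assms(1,2) by (simp add: qpoly_ok_def sym_iff)
  moreover have "qeval (f - g) x = 0" for x using assms(3) by (simp add: qeval_diff)
  ultimately show ?thesis using qeval_zero by fastforce
qed



lemma rat_decomp:
  fixes F :: "real set" assumes "finite F"
  shows "\<exists>B. finite B \<and> (\<forall>a\<in>F. \<exists>c. (\<forall>r. c r \<in> \<rat>) \<and> a = (\<Sum>r\<in>B. c r * r)) \<and>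
     (\<forall>c. (\<forall>r\<in>B. c r \<in> \<rat>) \<and> (\<Sum>r\<in>B. c r * r) = 0 \<longrightarrow> (\<forall>r\<in>B. c r = 0))"
  using assms
proof (induction F rule: finite_induct)
  case empty
  show ?case by (rule exI[of _ "{}"]) auto
next
  case (insert a F)
  then obtain B where fB: "finite B" and rep: "\<forall>a\<in>F. \<exists>c. (\<forall>r. c r \<in> \<rat>) \<and> a = (\<Sum>r\<in>B. c r * r)"
    and ind: "\<forall>c. (\<forall>r\<in>B. c r \<in> \<rat>) \<and> (\<Sum>r\<in>B. c r * r) = 0 \<longrightarrow> (\<forall>r\<in>B. c r = 0)" by blast
  show ?case
  proof (cases "\<exists>c. (\<forall>r. c r \<in> \<rat>) \<and> a = (\<Sum>r\<in>B. c r * r)")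
    case True
    then show ?thesis using fB rep ind by blast
  next
    case False
    have aB: "a \<notin> B"
    proof
      assume "a \<in> B"
      have "(\<Sum>r\<in>B. (if r = a then 1 else 0) * r) = (\<Sum>r\<in>B. if a = r then a else 0)"
        by (rule sum.cong) auto
      then have "a = (\<Sum>r\<in>B. (if r = a then 1 else 0) * r)" using fB \<open>a \<in> B\<close>
        by (simp add: sum.delta)
      then have "\<exists>c. (\<forall>r. c r \<in> \<rat>) \<and> a = (\<Sum>r\<in>B. c r * r)"
        by (intro exI[of _ "\<lambda>r. if r = a then 1 else 0"]) simp
      then show False using False by blast
    qed
    let ?B = "insert a B"
    have r1: "\<forall>x\<in>insert a F. \<exists>c. (\<forall>r. c r \<in> \<rat>) \<and> x = (\<Sum>r\<in>?B. c r * r)"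
    proof
      fix x assume "x \<in> insert a F"
      then show "\<exists>c. (\<forall>r. c r \<in> \<rat>) \<and> x = (\<Sum>r\<in>?B. c r * r)"
      proof
        assume "x = a"
        have "(\<Sum>r\<in>B. (if r = a then 1 else 0) * r) = (\<Sum>r\<in>B. 0::real)"
          by (rule sum.cong) (use aB in auto)
        then have "x = (\<Sum>r\<in>?B. (if r = a then 1 else 0) * r)" using fB aB \<open>x = a\<close>
          by simp
        then show ?thesis by (intro exI[of _ "\<lambda>r. if r = a then 1 else 0"]) simp
      next
        assume "x \<in> F"
        then obtain c where c: "\<forall>r. c r \<in> \<rat>" "x = (\<Sum>r\<in>B. c r * r)" using rep by blast
        have "(\<Sum>r\<in>?B. (c(a:=0)) r * r) = (\<Sum>r\<in>B. c r * r)" using fB aB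
          by (simp add: sum.insert) (rule sum.cong, auto)
        moreover have "\<forall>r. (c(a:=0)) r \<in> \<rat>" using c by simp
        ultimately show ?thesis using c by (intro exI[of _ "c(a:=0)"]) simp
      qed
    qed
    have r2: "\<forall>c. (\<forall>r\<in>?B. c r \<in> \<rat>) \<and> (\<Sum>r\<in>?B. c r * r) = 0 \<longrightarrow> (\<forall>r\<in>?B. c r = 0)"
    proof (intro allI impI)
      fix c assume h: "(\<forall>r\<in>?B. c r \<in> \<rat>) \<and> (\<Sum>r\<in>?B. c r * r) = 0"
      then have s: "c a * a + (\<Sum>r\<in>B. c r * r) = 0" using fB aB by simp
      have ca: "c a = 0"
      proof (rule ccontr)
        assume n: "c a \<noteq> 0"
        define d where "d r = (if r \<in> B then - c r / c a else 0)" for r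
        have "\<forall>r. d r \<in> \<rat>" using h by (auto simp: d_def)
        moreover have "a = (\<Sum>r\<in>B. d r * r)"
        proof -
          have "(\<Sum>r\<in>B. d r * r) = (\<Sum>r\<in>B. (- c r / c a) * r)" by (rule sum.cong) (auto simp: d_def)
          also have "\<dots> = - (\<Sum>r\<in>B. c r * r) / c a"
            by (simp add: sum_divide_distrib[symmetric] sum_negf)
          also have "\<dots> = a"
          proof -
            have "(\<Sum>r\<in>B. c r * r) = - (c a * a)" using s by linarith
            then show ?thesis using n by simp
          qed
          finally show ?thesis by simp
        qed
        ultimately show False using False by blast
      qed
      then have "(\<Sum>r\<in>B. c r * r) = 0" using s by simp
      then have "\<forall>r\<in>B. c r = 0" using ind h by blast
      then show "\<forall>r\<in>?B. c r = 0" using ca by simp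
    qed
    show ?thesis using fB r1 r2 by (intro exI[of _ ?B]) simp
  qed
qed



lemma rat_vec_scale:
  fixes y :: "real^'n::finite"
  assumes "\<forall>i. y$i \<in> \<rat>"
  shows "\<exists>n::real. n \<noteq> 0 \<and> int_vec (n *\<^sub>R y)"
proof -
  have "\<forall>i. \<exists>d::int. d > 0 \<and> of_int d * y$i \<in> \<int>"
  proof
    fix i
    obtain a b where ab: "b > 0" "y$i = of_int a / of_int b" using Rats_cases'[OF assms[rule_format, of i]] by blast
    have "of_int b * y$i = of_int a" using ab by simp
    then have "of_int b * y$i \<in> \<int>" by simp
    then show "\<exists>d::int. d > 0 \<and> of_int d * y$i \<in> \<int>" using ab(1) by blast
  qed
  from choice[OF this] obtain d where "\<forall>i. d i > 0 \<and> of_int (d i) * y$i \<in> \<int>" ..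
  then have d: "\<And>i. d i > 0" "\<And>i. of_int (d i) * y$i \<in> \<int>" by auto
  define N where "N = (\<Prod>i\<in>UNIV. d i)"
  have "N > 0" unfolding N_def using d(1) by (simp add: prod_pos)
  have Ni: "(of_int N :: real) * y$i \<in> \<int>" for i
  proof -
    have "N = d i * (\<Prod>j\<in>UNIV-{i}. d j)" unfolding N_def by (simp add: prod.remove)
    then have "(of_int N :: real) * y$i = of_int (\<Prod>j\<in>UNIV-{i}. d j) * (of_int (d i) * y$i)"
      by (metis mult.assoc mult.commute of_int_mult)
    then show ?thesis using d(2)[of i] by (metis Ints_mult Ints_of_int)
  qed
  have n0: "(of_int N :: real) \<noteq> 0" using \<open>N > 0\<close> by simp
  have "int_vec ((of_int N :: real) *\<^sub>R y)"
    unfolding int_vec_def vector_scaleR_component real_scaleR_def using Ni by blast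
  then show ?thesis using n0 by (intro exI[of _ "of_int N"]) simp
qed

lemma rat_kernel:
  fixes M :: "real^'n::finite^'m::finite" and x :: "real^'n"
  assumes Mq: "\<And>i j. M$i$j \<in> \<rat>" and Mx: "M *v x = 0"
  shows "x \<in> span {z. int_vec z \<and> M *v z = 0}"
proof -
  let ?S = "{z. int_vec z \<and> M *v z = 0}"
  have fin: "finite (range (\<lambda>i. x$i))" by simp
  from rat_decomp[OF fin] obtain B where fB: "finite B" and rep: "\<forall>a\<in>range (\<lambda>i. x$i). \<exists>c. (\<forall>r. c r \<in> \<rat>) \<and> a = (\<Sum>r\<in>B. c r * r)"
    and ind: "\<forall>c. (\<forall>r\<in>B. c r \<in> \<rat>) \<and> (\<Sum>r\<in>B. c r * r) = 0 \<longrightarrow> (\<forall>r\<in>B. c r = 0)"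
    by blast
  have "\<forall>i. \<exists>c. (\<forall>r. c r \<in> \<rat>) \<and> x$i = (\<Sum>r\<in>B. c r * r)" using rep by blast
  from choice[OF this] obtain c where "\<forall>i. (\<forall>r. c i r \<in> \<rat>) \<and> x$i = (\<Sum>r\<in>B. c i r * r)" ..
  then have c: "\<And>i r. c i r \<in> \<rat>" "\<And>i. x$i = (\<Sum>r\<in>B. c i r * r)" by auto
  define y where "y r = (\<chi> i. c i r)" for r
  have xs: "x = (\<Sum>r\<in>B. r *\<^sub>R y r)"
    by (simp add: vec_eq_iff y_def c(2) mult.commute)
  have yk: "M *v y r = 0" if rB: "r \<in> B" for r
  proof -
    have "(M *v y r)$j = 0" for j
    proof -
      have "0 = (M *v x)$j" using Mx by simp
      also have "\<dots> = (\<Sum>k\<in>UNIV. M$j$k * (\<Sum>r\<in>B. c k r * r))"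
        by (simp add: matrix_vector_mult_def c(2))
      also have "\<dots> = (\<Sum>k\<in>UNIV. \<Sum>r\<in>B. (M$j$k * c k r) * r)"
        by (simp add: sum_distrib_left mult.assoc)
      also have "\<dots> = (\<Sum>r\<in>B. \<Sum>k\<in>UNIV. (M$j$k * c k r) * r)"
        by (rule sum.swap)
      also have "\<dots> = (\<Sum>r\<in>B. (\<Sum>k\<in>UNIV. M$j$k * c k r) * r)"
        by (simp add: sum_distrib_right)
      finally have e: "(\<Sum>r\<in>B. (\<Sum>k\<in>UNIV. M$j$k * c k r) * r) = 0" by simp
      have my: "(M *v y r')$j = (\<Sum>k\<in>UNIV. M$j$k * c k r')" for r'
        by (simp add: matrix_vector_mult_def y_def)
      have q: "\<forall>r'\<in>B. (\<Sum>k\<in>UNIV. M$j$k * c k r') \<in> \<rat>"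
        using Mq c(1) by (intro ballI Rats_sum Rats_mult)
      have "(\<Sum>k\<in>UNIV. M$j$k * c k r) = 0" using ind[rule_format, of "\<lambda>r'. \<Sum>k\<in>UNIV. M$j$k * c k r'"] e q rB by simp
      then show ?thesis using my by simp
    qed
    then show ?thesis by (simp add: vec_eq_iff)
  qed
  have "y r \<in> span ?S" if "r \<in> B" for r
  proof -
    obtain n where n: "n \<noteq> 0" "int_vec (n *\<^sub>R y r)"
      using rat_vec_scale[of "y r"] c(1) by (auto simp: y_def)
    have "M *v (n *\<^sub>R y r) = 0" using yk[OF that]
      by (simp add: matrix_vector_mult_scaleR)
    then have "n *\<^sub>R y r \<in> span ?S" using n by (intro span_base) simp
    then have "(1/n) *\<^sub>R (n *\<^sub>R y r) \<in> span ?S" by (rule span_scale)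
    then show ?thesis using n by simp
  qed
  then show ?thesis unfolding xs by (intro span_sum span_scale)
qed



lemma qeval_pm: "qeval f (y + v) + qeval f (y - v) = 2 * qeval f y + 2 * (v \<bullet> (fst f *v v))"
  by (simp add: qeval_def matrix_vector_right_distrib matrix_vector_mult_diff_distrib
      inner_add_left inner_add_right inner_diff_left inner_diff_right algebra_simps)

lemma int_vec_add: "int_vec a \<Longrightarrow> int_vec b \<Longrightarrow> int_vec (a + b)"
  by (simp add: int_vec_def)
lemma int_vec_diff: "int_vec a \<Longrightarrow> int_vec b \<Longrightarrow> int_vec (a - b)"
  by (simp add: int_vec_def)

lemma psd_int:
  assumes "p \<in> Pd" "z0 \<in> zeroset p" "int_vec v"
  shows "v \<bullet> (fst p *v v) \<ge> 0"
proof -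
  have z: "int_vec z0" "qeval p z0 = 0" using assms(2) by (auto simp: zeroset_def)
  have "qeval p (z0 + v) \<ge> 0" "qeval p (z0 - v) \<ge> 0"
    using assms(1) int_vec_add[OF z(1) assms(3)] int_vec_diff[OF z(1) assms(3)] by (auto simp: Pd_def)
  then show ?thesis using qeval_pm[of p z0 v] z(2) by linarith
qed

lemma psd_rat:
  assumes "\<And>v. int_vec v \<Longrightarrow> v \<bullet> (C *v v) \<ge> 0" "\<forall>i. y$i \<in> \<rat>"
  shows "y \<bullet> ((C::real^'n::finite^'n) *v y) \<ge> 0"
proof -
  obtain n where n: "n \<noteq> 0" "int_vec (n *\<^sub>R y)" using rat_vec_scale[OF assms(2)] by blast
  have "0 \<le> (n *\<^sub>R y) \<bullet> (C *v (n *\<^sub>R y))" using assms(1) n(2) by blast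
  also have "\<dots> = n^2 * (y \<bullet> (C *v y))" by (simp add: matrix_vector_mult_scaleR power2_eq_square)
  finally show ?thesis using n(1) by (simp add: zero_le_mult_iff)
qed

lemma cont_quad: "continuous_on UNIV (\<lambda>x. x \<bullet> ((C::real^'n::finite^'n) *v x))"
  by (intro continuous_intros linear_continuous_on matrix_vector_mul_bounded_linear)

lemma psd_real:
  assumes "\<And>y. (\<forall>i. y$i \<in> \<rat>) \<Longrightarrow> y \<bullet> ((C::real^'n::finite^'n) *v y) \<ge> 0"
  shows "x \<bullet> (C *v x) \<ge> 0"
proof -
  let ?T = "{x. 0 \<le> x \<bullet> (C *v x)}"
  have cl: "closed ?T" using closed_Collect_le[OF continuous_on_const[of UNIV 0] cont_quad[of C]] by simp
  have "(\<Union>f \<in> Basis \<rightarrow> \<rat>. { \<Sum>i :: real^'n \<in> Basis. (f i :: real) *\<^sub>R i }) \<subseteq> ?T"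
  proof clarify
    fix f :: "real^'n \<Rightarrow> real" assume f: "f \<in> Basis \<rightarrow> \<rat>"
    let ?y = "\<Sum>i :: real^'n \<in> Basis. f i *\<^sub>R i"
    have "?y $ k \<in> \<rat>" for k
    proof -
      have "?y $ k = (\<Sum>i\<in>Basis. f i * (i $ k))" by (simp add: sum_component)
      also have "\<dots> \<in> \<rat>"
      proof (intro Rats_sum Rats_mult)
        fix i :: "real^'n" assume i: "i \<in> Basis"
        show "f i \<in> \<rat>" using f i by blast
        obtain j where "i = axis j 1" using i by (auto simp: Basis_vec_def)
        then show "i $ k \<in> \<rat>" by (simp add: axis_def)
      qed
      finally show ?thesis .
    qed
    then show "0 \<le> ?y \<bullet> (C *v ?y)" using assms by blast
  qed
  then have "closure (\<Union>f \<in> Basis \<rightarrow> \<rat>. { \<Sum>i :: real^'n \<in> Basis. (f i :: real) *\<^sub>R i }) \<subseteq> ?T"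
    using cl by (rule closure_minimal)
  then show ?thesis unfolding closure_rational_coordinates by blast
qed

lemma convex_qeval:
  fixes f :: "'n::finite qpoly"
  assumes "\<And>x. x \<bullet> (fst f *v x) \<ge> 0"
  shows "convex_on UNIV (qeval f)"
proof (rule convex_onI)
  fix t :: real and x y :: "real^'n"
  assume t: "t > 0" "t < 1"
  obtain C b c where f: "f = (C, b, c)" by (cases f) auto
  have "(1 - t) * qeval f x + t * qeval f y - qeval f ((1 - t) *\<^sub>R x + t *\<^sub>R y)
        = t * (1 - t) * ((x - y) \<bullet> (C *v (x - y)))"
    by (simp add: f qeval_def matrix_vector_right_distrib matrix_vector_mult_diff_distrib
      matrix_vector_mult_scaleR inner_add_left inner_add_right inner_diff_left inner_diff_right
      algebra_simps)
  moreover have "t * (1 - t) * ((x - y) \<bullet> (C *v (x - y))) \<ge> 0"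
    using t assms[of "x - y"] f by simp
  ultimately show "qeval f ((1 - t) *\<^sub>R x + t *\<^sub>R y) \<le> (1 - t) * qeval f x + t * qeval f y"
    by linarith
qed simp



lemma qpoly_ok_scaleR: "qpoly_ok f \<Longrightarrow> qpoly_ok (t *\<^sub>R f)"
  by (simp add: qpoly_ok_def sym_iff)

lemma perf_mult:
  assumes "perfect p" "qpoly_ok q" "\<forall>z\<in>zeroset p. qeval q z = 0"
  shows "\<exists>t. q = t *\<^sub>R p"
proof -
  obtain t where t: "\<forall>x. qeval q x = t * qeval p x" using assms unfolding perfect_def by blast
  have "qpoly_ok p" using assms(1) by (simp add: perfect_def Pd_def)
  then have "q = t *\<^sub>R p" using qeval_eq[OF assms(2) qpoly_ok_scaleR] t qeval_scaleR by metis
  then show ?thesis by blast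
qed

lemma not_hyp:
  assumes "perfect p"
  shows "\<not> in_affine_hyperplane (zeroset p)"
proof
  assume "in_affine_hyperplane (zeroset p)"
  then obtain a \<beta> where a: "a \<noteq> 0" "zeroset p \<subseteq> {x. a \<bullet> x = \<beta>}"
    unfolding in_affine_hyperplane_def by blast
  let ?q = "(0 :: real^'a^'a, a, - \<beta>)"
  have ok: "qpoly_ok ?q" by (simp add: qpoly_ok_def sym_iff)
  have "\<forall>z\<in>zeroset p. qeval ?q z = 0" using a(2) by (auto simp: qeval_def inner_commute)
  then obtain t where t: "?q = t *\<^sub>R p" using perf_mult[OF assms ok] by blast
  have A0: "fst p \<noteq> 0" using assms by (simp add: perfect_def Pd_def)
  have "0 = t *\<^sub>R fst p" using arg_cong[OF t, of fst] by simp
  then have "t = 0" using A0 by simp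
  then have "a = 0" using arg_cong[OF t, of "\<lambda>x. fst (snd x)"] by simp
  then show False using a(1) by simp
qed

lemma rational_part:
  fixes p :: "'n::finite qpoly"
  assumes "perfect p"
  shows "\<exists>M s. s \<noteq> 0 \<and> (\<forall>i j. M$i$j \<in> \<rat>) \<and> fst p = s *\<^sub>R M"
proof -
  obtain A b c where p: "p = (A, b, c)" by (cases p) auto
  have Pd: "p \<in> Pd" using assms by (simp add: perfect_def)
  have A0: "A \<noteq> 0" using Pd p by (simp add: Pd_def)
  have symA: "\<And>i j. A$i$j = A$j$i" using Pd p by (simp add: Pd_def qpoly_ok_def sym_iff)
  define F where "F = (\<lambda>(i,j). A$i$j) ` UNIV \<union> (\<lambda>i. b$i) ` UNIV \<union> {c}"
  have fin: "finite F" by (simp add: F_def)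
  from rat_decomp[OF fin] obtain B where fB: "finite B"
    and rep: "\<forall>a\<in>F. \<exists>c. (\<forall>r. c r \<in> \<rat>) \<and> a = (\<Sum>r\<in>B. c r * r)"
    and ind: "\<forall>c. (\<forall>r\<in>B. c r \<in> \<rat>) \<and> (\<Sum>r\<in>B. c r * r) = 0 \<longrightarrow> (\<forall>r\<in>B. c r = 0)"
    by blast
  define \<kappa> where "\<kappa> a = (SOME c. (\<forall>r. c r \<in> \<rat>) \<and> a = (\<Sum>r\<in>B. c r * r))" for a
  have \<kappa>: "(\<forall>r. \<kappa> a r \<in> \<rat>) \<and> a = (\<Sum>r\<in>B. \<kappa> a r * r)" if "a \<in> F" for a
  proof -
    have "\<exists>c. (\<forall>r. c r \<in> \<rat>) \<and> a = (\<Sum>r\<in>B. c r * r)" using rep that by blast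
    from someI_ex[OF this] show ?thesis unfolding \<kappa>_def .
  qed
  have \<kappa>A: "(\<forall>r. \<kappa> (A$i$j) r \<in> \<rat>) \<and> A$i$j = (\<Sum>r\<in>B. \<kappa> (A$i$j) r * r)" for i j
    by (rule \<kappa>) (auto simp: F_def)
  have \<kappa>b: "(\<forall>r. \<kappa> (b$i) r \<in> \<rat>) \<and> b$i = (\<Sum>r\<in>B. \<kappa> (b$i) r * r)" for i
    by (rule \<kappa>) (auto simp: F_def)
  have \<kappa>c: "(\<forall>r. \<kappa> c r \<in> \<rat>) \<and> c = (\<Sum>r\<in>B. \<kappa> c r * r)"
    by (rule \<kappa>) (auto simp: F_def)
  define P where "P r = ((\<chi> i j. \<kappa> (A$i$j) r), (\<chi> i. \<kappa> (b$i) r), \<kappa> c r)" for r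
  have psum: "p = (\<Sum>r\<in>B. r *\<^sub>R P r)"
  proof -
    have 1: "fst (\<Sum>r\<in>B. r *\<^sub>R P r) = A"
    proof -
      have "fst (\<Sum>r\<in>B. r *\<^sub>R P r) $ i $ j = A $ i $ j" for i j
      proof -
        have "fst (\<Sum>r\<in>B. r *\<^sub>R P r) $ i $ j = (\<Sum>r\<in>B. r * \<kappa> (A$i$j) r)"
          by (simp add: fst_sum P_def)
        also have "\<dots> = A$i$j" using \<kappa>A[of i j] by (simp add: mult.commute)
        finally show ?thesis .
      qed
      then show ?thesis by (simp add: vec_eq_iff)
    qed
    have 2: "fst (snd (\<Sum>r\<in>B. r *\<^sub>R P r)) = b"
    proof -
      have "fst (snd (\<Sum>r\<in>B. r *\<^sub>R P r)) $ i = b $ i" for i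
      proof -
        have "fst (snd (\<Sum>r\<in>B. r *\<^sub>R P r)) $ i = (\<Sum>r\<in>B. r * \<kappa> (b$i) r)"
          by (simp add: fst_sum snd_sum P_def)
        also have "\<dots> = b$i" using \<kappa>b[of i] by (simp add: mult.commute)
        finally show ?thesis .
      qed
      then show ?thesis by (simp add: vec_eq_iff)
    qed
    have 3: "snd (snd (\<Sum>r\<in>B. r *\<^sub>R P r)) = c"
    proof -
      have "snd (snd (\<Sum>r\<in>B. r *\<^sub>R P r)) = (\<Sum>r\<in>B. r * \<kappa> c r)"
        by (simp add: snd_sum P_def)
      also have "\<dots> = c" using \<kappa>c by (simp add: mult.commute)
      finally show ?thesis .
    qed
    show ?thesis using 1 2 3 p by (simp add: prod_eq_iff)
  qed
  have qsum: "qeval p x = (\<Sum>r\<in>B. qeval (P r) x * r)" for x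
    by (subst psum) (simp add: qeval_sum qeval_scaleR mult.commute)
  have okP: "qpoly_ok (P r)" for r
    by (simp add: qpoly_ok_def sym_iff P_def symA)
  have ratP: "qeval (P r) z \<in> \<rat>" if z: "int_vec z" for r z
  proof -
    have zq: "z$i \<in> \<rat>" for i using z Ints_subset_Rats by (auto simp: int_vec_def)
    show ?thesis
      unfolding qeval_def inner_vec_def matrix_vector_mult_def P_def
      using \<kappa>A \<kappa>b \<kappa>c zq
      by (simp add: Rats_add Rats_sum Rats_mult)
  qed
  have van: "\<forall>z\<in>zeroset p. qeval (P r) z = 0" if rB: "r \<in> B" for r
  proof
    fix z assume z: "z \<in> zeroset p"
    then have "qeval p z = 0" "int_vec z" by (auto simp: zeroset_def)
    then have "(\<Sum>r\<in>B. qeval (P r) z * r) = 0" "\<forall>r\<in>B. qeval (P r) z \<in> \<rat>"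
      using qsum ratP by auto
    then show "qeval (P r) z = 0" using ind[rule_format, of "\<lambda>r. qeval (P r) z"] rB by blast
  qed
  have "\<forall>r\<in>B. \<exists>t. P r = t *\<^sub>R p" using perf_mult[OF assms okP] van by blast
  then obtain t where t: "\<And>r. r \<in> B \<Longrightarrow> P r = t r *\<^sub>R p" by metis
  have "\<exists>r\<in>B. t r \<noteq> 0"
  proof (rule ccontr)
    assume "\<not> (\<exists>r\<in>B. t r \<noteq> 0)"
    then have "\<forall>r\<in>B. P r = 0" using t by simp
    then have "p = 0" using psum by simp
    then show False using A0 p by (simp add: zero_prod_def)
  qed
  then obtain r where r: "r \<in> B" "t r \<noteq> 0" by blast
  have "fst (P r) = t r *\<^sub>R A" using t[OF r(1)] p by simp
  then have "A = (1 / t r) *\<^sub>R fst (P r)" using r(2) by simp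
  moreover have "\<forall>i j. fst (P r) $ i $ j \<in> \<rat>" using \<kappa>A by (simp add: P_def)
  ultimately show ?thesis using r(2) p by (intro exI[of _ "fst (P r)"] exI[of _ "1 / t r"]) simp
qed



lemma subspace_ker: "subspace {x. (A::real^'n::finite^'n) *v x = 0}"
  by (simp add: subspace_def matrix_vector_right_distrib matrix_vector_mult_scaleR)

theorem proposition1:
  fixes p :: "'n::finite qpoly"
  assumes "perfect p"
  shows "quad_part p \<in> Phi \<and> dim (Ltype_domain (Del (quad_part p))) = 1"
proof -
  have Pd: "p \<in> Pd" using assms by (simp add: perfect_def)
  obtain z0 where z0: "z0 \<in> zeroset p" using assms by (auto simp: perfect_def)
  define A where "A = fst p"
  have qA: "quad_part p = A" by (simp add: quad_part_def A_def)
  have symA: "transpose A = A" using Pd by (simp add: Pd_def qpoly_ok_def A_def)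
  have A0: "A \<noteq> 0" using Pd by (simp add: Pd_def A_def)
  have psd: "x \<bullet> (A *v x) \<ge> 0" for x
    by (rule psd_real, rule psd_rat) (use psd_int[OF Pd z0] in \<open>auto simp: A_def\<close>)
  obtain M s where Ms: "s \<noteq> 0" "\<forall>i j. M$i$j \<in> \<rat>" "A = s *\<^sub>R M"
    using rational_part[OF assms] unfolding A_def by blast
  have AM: "A *v x = 0 \<longleftrightarrow> M *v x = 0" for x
    using Ms(1,3) by (simp add: scaleR_matrix_vector_assoc[symmetric])
  have ker: "{x. A *v x = 0} = span {z. int_vec z \<and> A *v z = 0}"
  proof
    show "{x. A *v x = 0} \<subseteq> span {z. int_vec z \<and> A *v z = 0}"
      using rat_kernel[of M] Ms(2) AM by auto
    show "span {z. int_vec z \<and> A *v z = 0} \<subseteq> {x. A *v x = 0}"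
      by (rule span_minimal) (auto simp: subspace_ker)
  qed
  have PhiA: "A \<in> Phi" using symA psd ker by (simp add: Phi_def)
  let ?L = "Ltype_domain (Del A)"
  have AL: "A \<in> ?L" using PhiA by (simp add: Ltype_domain_def)
  have hullD: "convex hull (zeroset p) \<in> Del A"
    unfolding Del_def using Pd qA not_hyp[OF assms] by blast
  have Lsub: "?L \<subseteq> span {A}"
  proof
    fix \<psi> assume "\<psi> \<in> ?L"
    then have \<psi>: "\<psi> \<in> Phi" "Del \<psi> = Del A" by (auto simp: Ltype_domain_def)
    then have "convex hull (zeroset p) \<in> Del \<psi>" using hullD by simp
    then obtain f where f: "f \<in> Pd" "quad_part f = \<psi>" "convex hull (zeroset f) = convex hull (zeroset p)"
      unfolding Del_def by auto
    have cf: "convex_on UNIV (qeval f)"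
      using \<psi>(1) f(2) by (intro convex_qeval) (auto simp: Phi_def quad_part_def)
    have le: "\<forall>x\<in>convex hull (zeroset f). qeval f x \<le> 0"
      by (rule convex_on_convex_hull_bound) (auto intro: convex_on_subset[OF cf] simp: zeroset_def)
    have van: "\<forall>z\<in>zeroset p. qeval f z = 0"
    proof
      fix z assume z: "z \<in> zeroset p"
      then have "z \<in> convex hull (zeroset f)" using f(3) by (simp add: hull_inc)
      then have "qeval f z \<le> 0" using le by blast
      moreover have "qeval f z \<ge> 0" using f(1) z by (auto simp: Pd_def zeroset_def)
      ultimately show "qeval f z = 0" by simp
    qed
    have "qpoly_ok f" using f(1) by (simp add: Pd_def)
    then obtain t where "f = t *\<^sub>R p" using perf_mult[OF assms _ van] by blast
    then have "\<psi> = t *\<^sub>R A" using f(2) by (simp add: quad_part_def A_def)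
    then show "\<psi> \<in> span {A}" by (simp add: span_base span_scale)
  qed
  have "span ?L = span {A}"
  proof
    show "span ?L \<subseteq> span {A}" using Lsub by (simp add: span_minimal)
    show "span {A} \<subseteq> span ?L" using AL by (simp add: span_mono)
  qed
  then have "dim ?L = 1" by (metis dim_span dim_singleton A0)
  then show ?thesis using PhiA qA by simp
qed


end
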